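(* Let $A=[a_{ij}]$ be a real $n\times n$ matrix with zero diagonal and $f(\sigma)=\sum_{p=1}^{n-1}\sum_{q=p+1}^n a_{\sigma(p)\sigma(q)}$ its LOP objective function on $\Sigma_n$. Let $k\le n$, let $i_1,\dots,i_k\in\{1,\dots,n\}$ be distinct, and let $S=\{\sigma\in\Sigma_n:\sigma(1)=i_1,\dots,\sigma(k)=i_k\}$. Then $$\frac{1}{|S|}\sum_{\sigma\in S}f(\sigma)=\sum_{r=1}^{k}\ \sum_{j\in\{1,\dots,n\}\setminus\{i_1,\dots,i_r\}}a_{i_r j}+\frac12\sum_{l,m\in\{1,\dots,n\}\setminus\{i_1,\dots,i_k\}}a_{lm}.$$
   Context: $\Sigma_n$ is the symmetric group on $\{1,\dots,n\}$; $\sigma(p)$ is the row/column index placed in position $p$. *)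

theory Defs
  imports "HOL-Analysis.Analysis" "HOL-Combinatorics.Permutations"
begin

definition lop_obj :: "nat \<Rightarrow> (nat \<Rightarrow> nat \<Rightarrow> real) \<Rightarrow> (nat \<Rightarrow> nat) \<Rightarrow> real" where
  "lop_obj n A \<sigma> = (\<Sum>p = 1..n-1. \<Sum>q = p+1..n. A (\<sigma> p) (\<sigma> q))"

end

theory Submission
  imports Defs
begin

lemma exists_perm:
  fixes n k :: nat and i :: "nat \<Rightarrow> nat"
  assumes kn: "k \<le> n"
    and i_range: "\<And>r. r \<in> {1..k} \<Longrightarrow> i r \<in> {1..n}"
    and i_inj: "inj_on i {1..k}"
  shows "\<exists>\<sigma>. \<sigma> permutes {1..n} \<and> (\<forall>r\<in>{1..k}. \<sigma> r = i r)"
proof -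
  have sub: "i ` {1..k} \<subseteq> {1..n}" using i_range by auto
  have ci: "card (i ` {1..k}) = k" using card_image[OF i_inj] by simp
  have "card ({1..n} - i ` {1..k}) = n - k"
    using card_Diff_subset[OF _ sub] ci by simp
  moreover have "card {k+1..n} = n - k" by simp
  ultimately obtain h where h: "bij_betw h {k+1..n} ({1..n} - i ` {1..k})"
    using finite_same_card_bij[of "{k+1..n}" "{1..n} - i ` {1..k}"] by auto
  define \<sigma> where "\<sigma> x = (if x \<in> {1..k} then i x else if x \<in> {k+1..n} then h x else x)" for x
  have b1: "bij_betw \<sigma> {1..k} (i ` {1..k})"
    using i_inj by (subst bij_betw_cong[where g=i]) (auto simp: \<sigma>_def inj_on_imp_bij_betw)
  have b2: "bij_betw \<sigma> {k+1..n} ({1..n} - i ` {1..k})"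
    using h by (subst bij_betw_cong[where g=h]) (auto simp: \<sigma>_def)
  have "bij_betw \<sigma> ({1..k} \<union> {k+1..n}) (i ` {1..k} \<union> ({1..n} - i ` {1..k}))"
    by (rule bij_betw_combine[OF b1 b2]) auto
  moreover have "{1..k} \<union> {k+1..n} = {1..n}" using kn by auto
  moreover have "i ` {1..k} \<union> ({1..n} - i ` {1..k}) = {1..n}" using sub by auto
  ultimately have "bij_betw \<sigma> {1..n} {1..n}" by simp
  moreover have "\<And>x. x \<notin> {1..n} \<Longrightarrow> \<sigma> x = x" unfolding \<sigma>_def using kn by auto
  ultimately have "\<sigma> permutes {1..n}" by (rule bij_imp_permutes)
  moreover have "\<forall>r\<in>{1..k}. \<sigma> r = i r" unfolding \<sigma>_def by auto
  ultimately show ?thesis by blast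
qed

lemma image_tail:
  fixes n k p :: nat and i :: "nat \<Rightarrow> nat"
  assumes perm: "\<sigma> permutes {1..n}" and fx: "\<forall>r\<in>{1..k}. \<sigma> r = i r" and pk: "p \<le> k" and kn: "k \<le> n"
  shows "\<sigma> ` {p+1..n} = {1..n} - i ` {1..p}"
proof -
  have "{p+1..n} = {1..n} - {1..p}" by auto
  hence "\<sigma> ` {p+1..n} = \<sigma> ` {1..n} - \<sigma> ` {1..p}"
    using image_set_diff[OF permutes_inj[OF perm]] by simp
  also have "\<sigma> ` {1..n} = {1..n}" using permutes_image[OF perm] .
  also have "\<sigma> ` {1..p} = i ` {1..p}" using fx pk by (auto simp: image_def)
  finally show ?thesis .
qed

lemma lop_pairs:
  "lop_obj n A \<sigma> = (\<Sum>(p,q)\<in>{(p,q). 1 \<le> p \<and> p < q \<and> q \<le> n}. A (\<sigma> p) (\<sigma> q))"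
proof -
  have "{(p,q). 1 \<le> p \<and> p < q \<and> q \<le> n} = Sigma {1..n-1} (\<lambda>p. {p+1..n})" by auto
  then show ?thesis unfolding lop_obj_def by (simp add: sum.Sigma)
qed

theorem proposition5:
  fixes n k :: nat and A :: "nat \<Rightarrow> nat \<Rightarrow> real" and i :: "nat \<Rightarrow> nat"
  assumes zero_diag: "\<And>j. j \<in> {1..n} \<Longrightarrow> A j j = 0"
    and kn: "k \<le> n"
    and i_range: "\<And>r. r \<in> {1..k} \<Longrightarrow> i r \<in> {1..n}"
    and i_inj: "inj_on i {1..k}"
  defines "S \<equiv> {\<sigma>. \<sigma> permutes {1..n} \<and> (\<forall>r\<in>{1..k}. \<sigma> r = i r)}"
  shows "(\<Sum>\<sigma>\<in>S. lop_obj n A \<sigma>) / real (card S)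
       = (\<Sum>r = 1..k. \<Sum>j \<in> {1..n} - i ` {1..r}. A (i r) j)
         + 1/2 * (\<Sum>l \<in> {1..n} - i ` {1..k}. \<Sum>m \<in> {1..n} - i ` {1..k}. A l m)"
proof -
  define C1 where "C1 = (\<Sum>r = 1..k. \<Sum>j \<in> {1..n} - i ` {1..r}. A (i r) j)"
  define R where "R = {1..n} - i ` {1..k}"
  define C2 where "C2 = (\<Sum>l \<in> R. \<Sum>m \<in> R. A l m)"
  define P where "P = {(p,q). k < p \<and> p < q \<and> q \<le> (n::nat)}"
  define P' where "P' = {(p,q). k < q \<and> q < p \<and> p \<le> (n::nat)}"
  define D where "D = {(p,q). k < p \<and> p = q \<and> q \<le> (n::nat)}"
  define g where "g \<sigma> = (\<Sum>(p,q)\<in>P. A (\<sigma> p) (\<sigma> q))" for \<sigma> :: "nat \<Rightarrow> nat"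
  define \<tau> where "\<tau> p = (if k < p \<and> p \<le> n then n + k + 1 - p else p)" for p
  have finP: "finite P" unfolding P_def
    by (rule finite_subset[of _ "{0..n} \<times> {0..n}"]) auto
  have finP': "finite P'" unfolding P'_def
    by (rule finite_subset[of _ "{0..n} \<times> {0..n}"]) auto
  have finD: "finite D" unfolding D_def
    by (rule finite_subset[of _ "{0..n} \<times> {0..n}"]) auto
  have tt: "\<tau> (\<tau> p) = p" for p unfolding \<tau>_def by auto
  have tperm: "\<tau> permutes {1..n}"
    unfolding permutes_def
  proof (intro conjI allI impI)
    fix x assume "x \<notin> {1..n}" then show "\<tau> x = x" unfolding \<tau>_def by auto
  next
    fix y show "\<exists>!x. \<tau> x = y" by (metis tt)
  qed
  have tfix: "\<tau> r = r" if "r \<in> {1..k}" for r using that unfolding \<tau>_def by auto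
  have split: "lop_obj n A \<sigma> = C1 + g \<sigma>" if "\<sigma> \<in> S" for \<sigma>
  proof -
    have perm: "\<sigma> permutes {1..n}" and fx: "\<forall>r\<in>{1..k}. \<sigma> r = i r"
      using that unfolding S_def by auto
    define Q1 where "Q1 = Sigma {1..k} (\<lambda>p. {p+1..n})"
    have finQ1: "finite Q1" unfolding Q1_def by auto
    have "{(p,q). 1 \<le> p \<and> p < q \<and> q \<le> n} = Q1 \<union> P"
      unfolding Q1_def P_def using kn by auto
    moreover have "Q1 \<inter> P = {}" unfolding Q1_def P_def by auto
    ultimately have "lop_obj n A \<sigma> = (\<Sum>(p,q)\<in>Q1. A (\<sigma> p) (\<sigma> q)) + g \<sigma>"
      unfolding lop_pairs g_def using finQ1 finP by (simp add: sum.union_disjoint)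
    moreover have "(\<Sum>(p,q)\<in>Q1. A (\<sigma> p) (\<sigma> q)) = C1"
    proof -
      have "(\<Sum>(p,q)\<in>Q1. A (\<sigma> p) (\<sigma> q)) = (\<Sum>p=1..k. \<Sum>q=p+1..n. A (\<sigma> p) (\<sigma> q))"
        unfolding Q1_def by (simp add: sum.Sigma)
      also have "\<dots> = C1" unfolding C1_def
      proof (rule sum.cong[OF refl])
        fix p assume p: "p \<in> {1..k}"
        have "(\<Sum>q=p+1..n. A (\<sigma> p) (\<sigma> q)) = (\<Sum>q=p+1..n. A (i p) (\<sigma> q))"
          using fx p by simp
        also have "\<dots> = (\<Sum>j\<in>\<sigma> ` {p+1..n}. A (i p) j)"
          using sum.reindex[OF inj_on_subset[OF permutes_inj[OF perm] subset_UNIV], of "A (i p)" "{p+1..n}"]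
          by simp
        also have "\<sigma> ` {p+1..n} = {1..n} - i ` {1..p}"
          using image_tail[OF perm fx _ kn] p by auto
        finally show "(\<Sum>q=p+1..n. A (\<sigma> p) (\<sigma> q)) = (\<Sum>j\<in>{1..n} - i ` {1..p}. A (i p) j)" .
      qed
      finally show ?thesis .
    qed
    ultimately show ?thesis by simp
  qed
  have pair: "g \<sigma> + g (\<sigma> \<circ> \<tau>) = C2" if "\<sigma> \<in> S" for \<sigma>
  proof -
    have perm: "\<sigma> permutes {1..n}" and fx: "\<forall>r\<in>{1..k}. \<sigma> r = i r"
      using that unfolding S_def by auto
    have "g (\<sigma> \<circ> \<tau>) = (\<Sum>(p,q)\<in>P'. A (\<sigma> p) (\<sigma> q))"
      unfolding g_def
      by (rule sum.reindex_bij_witness[where i="\<lambda>(p,q). (\<tau> p, \<tau> q)" and j="\<lambda>(p,q). (\<tau> p, \<tau> q)"])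
        (auto simp: tt, auto simp: P_def P'_def \<tau>_def)
    moreover have "(\<Sum>(p,q)\<in>D. A (\<sigma> p) (\<sigma> q)) = 0"
    proof (rule sum.neutral, safe)
      fix p q assume "(p,q) \<in> D"
      then have "q = p" "p \<in> {1..n}" unfolding D_def by auto
      then show "A (\<sigma> p) (\<sigma> q) = 0" using zero_diag permutes_in_image[OF perm] by auto
    qed
    moreover have "{k+1..n} \<times> {k+1..n} = P \<union> P' \<union> D" unfolding P_def P'_def D_def by auto
    moreover have "P \<inter> P' = {}" "(P \<union> P') \<inter> D = {}" unfolding P_def P'_def D_def by auto
    ultimately have "g \<sigma> + g (\<sigma> \<circ> \<tau>) = (\<Sum>(p,q)\<in>{k+1..n} \<times> {k+1..n}. A (\<sigma> p) (\<sigma> q))"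
      unfolding g_def using finP finP' finD by (simp add: sum.union_disjoint)
    also have "\<dots> = (\<Sum>p=k+1..n. \<Sum>q=k+1..n. A (\<sigma> p) (\<sigma> q))"
      by (simp add: sum.cartesian_product)
    also have "\<dots> = (\<Sum>l\<in>\<sigma> ` {k+1..n}. \<Sum>m\<in>\<sigma> ` {k+1..n}. A l m)"
      using inj_on_subset[OF permutes_inj[OF perm] subset_UNIV]
      by (simp add: sum.reindex)
    also have "\<sigma> ` {k+1..n} = R" unfolding R_def using image_tail[OF perm fx _ kn] by auto
    finally show ?thesis unfolding C2_def .
  qed
  have finS: "finite S" unfolding S_def
    by (rule finite_subset[OF _ finite_permutations[of "{1..n}"]]) auto
  obtain \<sigma>0 where "\<sigma>0 permutes {1..n} \<and> (\<forall>r\<in>{1..k}. \<sigma>0 r = i r)"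
    using exists_perm[OF kn i_range i_inj] by blast
  then have "S \<noteq> {}" unfolding S_def by blast
  then have cS: "real (card S) > 0" using finS by (simp add: card_gt_0_iff)
  have tp2: "(\<lambda>x. a (\<tau> x)) permutes {Suc 0..n}" if "a permutes {Suc 0..n}" for a
    using permutes_compose[OF tperm, of a] that by (simp add: comp_def)
  have gS: "(\<Sum>\<sigma>\<in>S. g (\<sigma> \<circ> \<tau>)) = (\<Sum>\<sigma>\<in>S. g \<sigma>)"
    by (rule sum.reindex_bij_witness[where i="\<lambda>\<sigma>. \<sigma> \<circ> \<tau>" and j="\<lambda>\<sigma>. \<sigma> \<circ> \<tau>"])
      (auto simp: S_def tt tfix comp_def tp2)
  have "(\<Sum>\<sigma>\<in>S. lop_obj n A \<sigma>) = (\<Sum>\<sigma>\<in>S. C1 + g \<sigma>)" using split by simp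
  also have "\<dots> = real (card S) * C1 + (\<Sum>\<sigma>\<in>S. g \<sigma>)" by (simp add: sum.distrib)
  finally have e1: "(\<Sum>\<sigma>\<in>S. lop_obj n A \<sigma>) = real (card S) * C1 + (\<Sum>\<sigma>\<in>S. g \<sigma>)" .
  have "2 * (\<Sum>\<sigma>\<in>S. g \<sigma>) = (\<Sum>\<sigma>\<in>S. g \<sigma> + g (\<sigma> \<circ> \<tau>))" using gS by (simp add: sum.distrib)
  also have "\<dots> = real (card S) * C2" using pair by simp
  finally have e2: "(\<Sum>\<sigma>\<in>S. g \<sigma>) = real (card S) * C2 / 2" by simp
  show ?thesis unfolding C1_def[symmetric] R_def[symmetric] C2_def[symmetric] e1 e2
    using cS by (simp add: field_simps)
qed

end
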